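(* For every $n\ge1$ and every choice of coefficients, there exist real constants $\tau_{i,j},\sigma_{i,j}$ ($0\le i+j\le n$), depending on the coefficients, and a real polynomial $\phi$ of degree at most $2n+\frac{3+(-1)^n}{2}$ such that for all $h\in(0,+\infty)$, $$M(h)=\sum_{0\le i+j\le n}\tau_{i,j}I_{i,j}(h)+\sum_{0\le i+j\le n}\sigma_{i,j}J_{i,j}(h)+\phi\big(u(h)\big).$$
   Context: Fix an integer $n\ge 1$ and real coefficients $a^k_{i,j},b^k_{i,j}$ ($k=1,2,3,4$; $i+j\le n$), $f_k=\sum_{0\le i+j\le n}a^k_{i,j}x^iy^j$, $g_k=\sum_{0\le i+j\le n}b^k_{i,j}x^iy^j$. For $h>0$ let $u(h)=\sqrt{(\sqrt{1+4h}-1)/2}$ (so $u^4+u^2=h$), $\Gamma_h$ the circle $x^2+y^2=h$, and $A=(u,u^2)$, $B=(u,-u^2)$, $C=(-u,-u^2)$, $D=(-u,u^2)$. Let $\widehat{AB},\widehat{BC},\widehat{CD},\widehat{DA}$ be the arcs of $\Gamma_h$ traversed clockwise from $A$ to $B$ (through $(\sqrt h,0)$), $B$ to $C$ (through $(0,-\sqrt h)$), $C$ to $D$ (through $(-\sqrt h,0)$), $D$ to $A$ (through $(0,\sqrt h)$). Define $$M(h)=\int_{\widehat{AB}}g_1dx-f_1dy+\int_{\widehat{BC}}g_2dx-f_2dy+\int_{\widehat{CD}}g_3dx-f_3dy+\int_{\widehat{DA}}g_4dx-f_4dy,$$ the first order Melnikov function of the system $\dot x=y+\varepsilon f_k,\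 \dot y=-x+\varepsilon g_k$ on the regions $R_1=\{x>0,-x^2<y<x^2\}$, $R_2=\{y<-x^2\}$, $R_3=\{x<0,-x^2<y<x^2\}$, $R_4=\{y>x^2\}$. For integers $i,j\ge0$, $I_{i,j}(h)=\int_{\widehat{AB}}x^iy^jdx$ and $J_{i,j}(h)=\int_{\widehat{BC}}x^iy^jdx$. *)

theory Defs
  imports "HOL-Analysis.Analysis" "HOL-Computational_Algebra.Polynomial"
begin

definition bipoly :: "nat \<Rightarrow> (nat \<Rightarrow> nat \<Rightarrow> real) \<Rightarrow> real \<Rightarrow> real \<Rightarrow> real" where
  "bipoly n c x y = (\<Sum>i\<le>n. \<Sum>j\<le>n - i. c i j * x ^ i * y ^ j)"

text \<open>u(h) = sqrt((sqrt(1+4h)-1)/2), so that u^4+u^2 = h.\<close>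
definition uu :: "real \<Rightarrow> real" where
  "uu h = sqrt ((sqrt (1 + 4 * h) - 1) / 2)"

text \<open>Line integral of P dx + Q dy along the arc of the circle x^2+y^2=h
  parametrised by (sqrt h cos t, sqrt h sin t), traversed clockwise, i.e. with t
  decreasing from t0 to t1 (t1 \<le> t0).\<close>
definition cw_arc_int ::
  "(real \<Rightarrow> real \<Rightarrow> real) \<Rightarrow> (real \<Rightarrow> real \<Rightarrow> real) \<Rightarrow> real \<Rightarrow> real \<Rightarrow> real \<Rightarrow> real" where
  "cw_arc_int P Q h t0 t1 =
     - integral {t1..t0} (\<lambda>t. P (sqrt h * cos t) (sqrt h * sin t) * (- sqrt h * sin t)
                              + Q (sqrt h * cos t) (sqrt h * sin t) * (sqrt h * cos t))"

text \<open>Angle of A = (u,u^2) on the circle: arctan(u^2/u) = arctan u.\<close>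
definition angA :: "real \<Rightarrow> real" where
  "angA h = arctan (uu h)"

definition arcAB where "arcAB P Q h = cw_arc_int P Q h (angA h) (- angA h)"
definition arcBC where "arcBC P Q h = cw_arc_int P Q h (- angA h) (- pi + angA h)"
definition arcCD where "arcCD P Q h = cw_arc_int P Q h (pi + angA h) (pi - angA h)"
definition arcDA where "arcDA P Q h = cw_arc_int P Q h (pi - angA h) (angA h)"

text \<open>First order Melnikov function; a k, b k are the coefficient functions of f_k, g_k.\<close>
definition melnikov ::
  "nat \<Rightarrow> (nat \<Rightarrow> nat \<Rightarrow> nat \<Rightarrow> real) \<Rightarrow> (nat \<Rightarrow> nat \<Rightarrow> nat \<Rightarrow> real) \<Rightarrow> real \<Rightarrow> real" where
  "melnikov n a b h =
      arcAB (bipoly n (b 1)) (\<lambda>x y. - bipoly n (a 1) x y) h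
    + arcBC (bipoly n (b 2)) (\<lambda>x y. - bipoly n (a 2) x y) h
    + arcCD (bipoly n (b 3)) (\<lambda>x y. - bipoly n (a 3) x y) h
    + arcDA (bipoly n (b 4)) (\<lambda>x y. - bipoly n (a 4) x y) h"

definition Iint :: "nat \<Rightarrow> nat \<Rightarrow> real \<Rightarrow> real" where
  "Iint i j h = arcAB (\<lambda>x y. x ^ i * y ^ j) (\<lambda>x y. 0) h"

definition Jint :: "nat \<Rightarrow> nat \<Rightarrow> real \<Rightarrow> real" where
  "Jint i j h = arcBC (\<lambda>x y. x ^ i * y ^ j) (\<lambda>x y. 0) h"

end

theory Submission
  imports Defs
begin

definition good :: "nat \<Rightarrow> (real \<Rightarrow> real) \<Rightarrow> bool" where
  "good n f \<longleftrightarrow> (\<exists>(\<tau>::nat \<Rightarrow> nat \<Rightarrow> real) (\<sigma>::nat \<Rightarrow> nat \<Rightarrow> real) (\<phi>::real poly).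
           real (degree \<phi>) \<le> 2 * real n + (3 + (-1) ^ n) / 2 \<and>
           (\<forall>h>0. f h =
                    (\<Sum>i\<le>n. \<Sum>j\<le>n - i. \<tau> i j * Iint i j h)
                  + (\<Sum>i\<le>n. \<Sum>j\<le>n - i. \<sigma> i j * Jint i j h)
                  + poly \<phi> (uu h)))"

lemma bnd_eq: "2 * real n + (3 + (-1::real) ^ n) / 2 = (if even n then 2 * real n + 2 else 2 * real n + 1)"
  by (cases "even n") auto

lemma good_add:
  assumes "good n f" "good n g" shows "good n (\<lambda>h. f h + g h)"
proof -
  from assms(1) obtain t1 s1 p1 where 1: "real (degree p1) \<le> 2 * real n + (3 + (-1) ^ n) / 2"
    "\<forall>h>0. f h = (\<Sum>i\<le>n. \<Sum>j\<le>n - i. t1 i j * Iint i j h)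
                  + (\<Sum>i\<le>n. \<Sum>j\<le>n - i. s1 i j * Jint i j h) + poly p1 (uu h)"
    unfolding good_def by blast
  from assms(2) obtain t2 s2 p2 where 2: "real (degree p2) \<le> 2 * real n + (3 + (-1) ^ n) / 2"
    "\<forall>h>0. g h = (\<Sum>i\<le>n. \<Sum>j\<le>n - i. t2 i j * Iint i j h)
                  + (\<Sum>i\<le>n. \<Sum>j\<le>n - i. s2 i j * Jint i j h) + poly p2 (uu h)"
    unfolding good_def by blast
  have "real (degree (p1 + p2)) \<le> 2 * real n + (3 + (-1) ^ n) / 2"
  proof -
    have "degree (p1 + p2) \<le> max (degree p1) (degree p2)" by (rule degree_add_le_max)
    then have "degree (p1 + p2) \<le> degree p1 \<or> degree (p1 + p2) \<le> degree p2" by linarith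
    then show ?thesis
    proof
      assume "degree (p1 + p2) \<le> degree p1"
      then have "real (degree (p1 + p2)) \<le> real (degree p1)" by (rule of_nat_mono)
      then show ?thesis using 1(1) by linarith
    next
      assume "degree (p1 + p2) \<le> degree p2"
      then have "real (degree (p1 + p2)) \<le> real (degree p2)" by (rule of_nat_mono)
      then show ?thesis using 2(1) by linarith
    qed
  qed
  moreover have "\<forall>h>0. f h + g h = (\<Sum>i\<le>n. \<Sum>j\<le>n - i. (\<lambda>i j. t1 i j + t2 i j) i j * Iint i j h)
                  + (\<Sum>i\<le>n. \<Sum>j\<le>n - i. (\<lambda>i j. s1 i j + s2 i j) i j * Jint i j h) + poly (p1+p2) (uu h)"
  proof (intro allI impI)
    fix h :: real assume h: "h > 0"
    have a: "(\<Sum>i\<le>n. \<Sum>j\<le>n - i. (t1 i j + t2 i j) * Iint i j h) =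
       (\<Sum>i\<le>n. \<Sum>j\<le>n - i. t1 i j * Iint i j h) + (\<Sum>i\<le>n. \<Sum>j\<le>n - i. t2 i j * Iint i j h)"
      by (simp only: distrib_right sum.distrib)
    have b: "(\<Sum>i\<le>n. \<Sum>j\<le>n - i. (s1 i j + s2 i j) * Jint i j h) =
       (\<Sum>i\<le>n. \<Sum>j\<le>n - i. s1 i j * Jint i j h) + (\<Sum>i\<le>n. \<Sum>j\<le>n - i. s2 i j * Jint i j h)"
      by (simp only: distrib_right sum.distrib)
    show "f h + g h = (\<Sum>i\<le>n. \<Sum>j\<le>n - i. (\<lambda>i j. t1 i j + t2 i j) i j * Iint i j h)
                  + (\<Sum>i\<le>n. \<Sum>j\<le>n - i. (\<lambda>i j. s1 i j + s2 i j) i j * Jint i j h) + poly (p1+p2) (uu h)"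
      using 1(2) 2(2) h unfolding a b poly_add by simp
  qed
  ultimately show ?thesis unfolding good_def by (intro exI conjI) assumption+
qed

lemma good_scale:
  assumes "good n f" shows "good n (\<lambda>h. c * f h)"
proof -
  from assms(1) obtain t1 s1 p1 where 1: "real (degree p1) \<le> 2 * real n + (3 + (-1) ^ n) / 2"
    "\<forall>h>0. f h = (\<Sum>i\<le>n. \<Sum>j\<le>n - i. t1 i j * Iint i j h)
                  + (\<Sum>i\<le>n. \<Sum>j\<le>n - i. s1 i j * Jint i j h) + poly p1 (uu h)"
    unfolding good_def by blast
  have "real (degree (smult c p1)) \<le> 2 * real n + (3 + (-1) ^ n) / 2"
    using 1(1) of_nat_mono[OF degree_smult_le[of c p1], where 'a=real] by linarith
  moreover have "\<forall>h>0. c * f h = (\<Sum>i\<le>n. \<Sum>j\<le>n - i. (\<lambda>i j. c * t1 i j) i j * Iint i j h)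
                  + (\<Sum>i\<le>n. \<Sum>j\<le>n - i. (\<lambda>i j. c * s1 i j) i j * Jint i j h) + poly (smult c p1) (uu h)"
    using 1(2) by (simp add: distrib_left sum_distrib_left mult.assoc)
  ultimately show ?thesis unfolding good_def by (intro exI conjI) assumption+
qed

lemma good_zero: "good n (\<lambda>h. 0)"
  unfolding good_def
  by (rule exI[of _ "\<lambda>i j. 0"], rule exI[of _ "\<lambda>i j. 0"], rule exI[of _ 0]) (simp add: bnd_eq)

lemma good_cong: "good n g \<Longrightarrow> (\<And>h. h > 0 \<Longrightarrow> f h = g h) \<Longrightarrow> good n f"
  unfolding good_def by simp

lemma good_sum: "finite K \<Longrightarrow> (\<And>k. k \<in> K \<Longrightarrow> good n (f k)) \<Longrightarrow> good n (\<lambda>h. \<Sum>k\<in>K. f k h)"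
proof (induction K rule: finite_induct)
  case empty then show ?case by (simp add: good_zero)
next
  case (insert x F)
  then show ?case by (simp add: good_add)
qed

lemma good_diff: "good n f \<Longrightarrow> good n g \<Longrightarrow> good n (\<lambda>h. f h - g h)"
  using good_add[of n f "\<lambda>h. (-1) * g h"] good_scale[of n g "-1"] by simp

lemma ifmul: "(if P then 1 else 0) * (x::real) = (if P then x else 0)" by simp

lemma delta2: fixes n i j :: nat assumes "i \<le> n" "j \<le> n - i"
  shows "(\<Sum>a\<le>n. \<Sum>b\<le>n - a. (if a = i \<and> b = j then 1 else 0) * F a b) = (F i j :: real)"
proof -
  have "(\<Sum>a\<le>n. \<Sum>b\<le>n - a. (if a = i \<and> b = j then 1 else 0) * F a b)
      = (\<Sum>a\<le>n. if a = i then (\<Sum>b\<le>n - a. if b = j then F a b else 0) else 0)"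
    unfolding ifmul by (intro sum.cong refl) auto
  also have "\<dots> = (\<Sum>b\<le>n - i. if b = j then F i b else 0)" using assms(1) by (subst sum.delta[where S="{..n::nat}"]) auto
  also have "\<dots> = F i j" using assms(2) by (subst sum.delta[where S="{..n-i::nat}"]) auto
  finally show ?thesis .
qed

lemma good_I: assumes "i + j \<le> n" shows "good n (Iint i j)"
proof -
  have "\<forall>h>0. Iint i j h = (\<Sum>a\<le>n. \<Sum>b\<le>n - a. (\<lambda>a b. if a = i \<and> b = j then 1 else 0) a b * Iint a b h)
                  + (\<Sum>a\<le>n. \<Sum>b\<le>n - a. (\<lambda>a b. 0) a b * Jint a b h) + poly 0 (uu h)"
    using assms by (simp only: delta2[of i n j]) simp
  then show ?thesis unfolding good_def
    by (rule_tac exI[of _ "(\<lambda>a b. if a = i \<and> b = j then 1 else 0)"], rule_tac exI[of _ "(\<lambda>a b. 0)"], rule_tac exI[of _ 0]) (simp add: bnd_eq)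
qed

lemma good_J: assumes "i + j \<le> n" shows "good n (Jint i j)"
proof -
  have "\<forall>h>0. Jint i j h = (\<Sum>a\<le>n. \<Sum>b\<le>n - a. (\<lambda>a b. 0) a b * Iint a b h)
                  + (\<Sum>a\<le>n. \<Sum>b\<le>n - a. (\<lambda>a b. if a = i \<and> b = j then 1 else 0) a b * Jint a b h) + poly 0 (uu h)"
    using assms by (simp only: delta2[of i n j]) simp
  then show ?thesis unfolding good_def
    by (rule_tac exI[of _ "(\<lambda>a b. 0)"], rule_tac exI[of _ "(\<lambda>a b. if a = i \<and> b = j then 1 else 0)"], rule_tac exI[of _ 0]) (simp add: bnd_eq)
qed

lemma good_monom:
  assumes "c \<noteq> 0 \<Longrightarrow> real k \<le> 2 * real n + (3 + (-1) ^ n) / 2"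
  shows "good n (\<lambda>h. c * uu h ^ k)"
proof -
  have "real (degree (monom c k)) \<le> 2 * real n + (3 + (-1) ^ n) / 2"
  proof (cases "c = 0")
    case True then show ?thesis by (simp add: bnd_eq)
  next
    case False then show ?thesis using assms by (simp add: degree_monom_eq)
  qed
  moreover have "\<forall>h>0. c * uu h ^ k = (\<Sum>a\<le>n. \<Sum>b\<le>n - a. (\<lambda>a b. 0) a b * Iint a b h)
                  + (\<Sum>a\<le>n. \<Sum>b\<le>n - a. (\<lambda>a b. 0) a b * Jint a b h) + poly (monom c k) (uu h)"
    by (simp add: poly_monom)
  ultimately show ?thesis unfolding good_def by (intro exI conjI) assumption+
qed


definition ig :: "(real \<Rightarrow> real \<Rightarrow> real) \<Rightarrow> (real \<Rightarrow> real \<Rightarrow> real) \<Rightarrow> real \<Rightarrow> real \<Rightarrow> real" where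
  "ig P Q h t = P (sqrt h * cos t) (sqrt h * sin t) * (- sqrt h * sin t)
                              + Q (sqrt h * cos t) (sqrt h * sin t) * (sqrt h * cos t)"

lemma cw_ig: "cw_arc_int P Q h t0 t1 = - integral {t1..t0} (ig P Q h)"
  unfolding cw_arc_int_def ig_def by simp

lemma cont_mono: "continuous_on S (\<lambda>t::real. (sqrt h * cos t) ^ i * (sqrt h * sin t) ^ j * (- sqrt h * sin t))"
  "continuous_on S (\<lambda>t::real. (sqrt h * cos t) ^ i * (sqrt h * sin t) ^ j * (sqrt h * cos t))"
  by (intro continuous_intros)+

lemma arc_bipoly:
  "cw_arc_int (bipoly n c) (\<lambda>x y. - bipoly n d x y) h t0 t1 =
   (\<Sum>i\<le>n. \<Sum>j\<le>n - i. c i j * cw_arc_int (\<lambda>x y. x ^ i * y ^ j) (\<lambda>x y. 0) h t0 t1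
                      - d i j * cw_arc_int (\<lambda>x y. 0) (\<lambda>x y. x ^ i * y ^ j) h t0 t1)"
proof -
  define A where "A i j t = (sqrt h * cos t) ^ i * (sqrt h * sin t) ^ j * (- sqrt h * sin t)" for i j t
  define B where "B i j t = (sqrt h * cos t) ^ i * (sqrt h * sin t) ^ j * (sqrt h * cos t)" for i j t
  have iA: "\<And>i j. A i j integrable_on {t1..t0}" unfolding A_def
    by (intro integrable_continuous_interval cont_mono)
  have iB: "\<And>i j. B i j integrable_on {t1..t0}" unfolding B_def
    by (intro integrable_continuous_interval cont_mono)
  have e1: "cw_arc_int (\<lambda>x y. x ^ i * y ^ j) (\<lambda>x y. 0) h t0 t1 = - integral {t1..t0} (A i j)" for i j
    unfolding cw_ig ig_def A_def by simp
  have e2: "cw_arc_int (\<lambda>x y. 0) (\<lambda>x y. x ^ i * y ^ j) h t0 t1 = - integral {t1..t0} (B i j)" for i j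
    unfolding cw_ig ig_def B_def by simp
  have pw: "ig (bipoly n c) (\<lambda>x y. - bipoly n d x y) h t =
     (\<Sum>i\<le>n. \<Sum>j\<le>n - i. c i j * A i j t - d i j * B i j t)" for t
  proof -
    let ?X = "sqrt h * cos t" and ?Y = "sqrt h * sin t"
    have "ig (bipoly n c) (\<lambda>x y. - bipoly n d x y) h t =
      (\<Sum>i\<le>n. \<Sum>j\<le>n - i. c i j * ?X ^ i * ?Y ^ j) * (- sqrt h * sin t)
     - (\<Sum>i\<le>n. \<Sum>j\<le>n - i. d i j * ?X ^ i * ?Y ^ j) * (sqrt h * cos t)"
      unfolding ig_def bipoly_def by simp
    also have "\<dots> = (\<Sum>i\<le>n. \<Sum>j\<le>n - i. c i j * ?X ^ i * ?Y ^ j * (- sqrt h * sin t))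
     - (\<Sum>i\<le>n. \<Sum>j\<le>n - i. d i j * ?X ^ i * ?Y ^ j * (sqrt h * cos t))"
      by (simp only: sum_distrib_right)
    also have "\<dots> = (\<Sum>i\<le>n. \<Sum>j\<le>n - i. c i j * ?X ^ i * ?Y ^ j * (- sqrt h * sin t)
                  - d i j * ?X ^ i * ?Y ^ j * (sqrt h * cos t))"
      by (simp only: sum_subtractf)
    also have "\<dots> = (\<Sum>i\<le>n. \<Sum>j\<le>n - i. c i j * A i j t - d i j * B i j t)"
      unfolding A_def B_def by (simp only: mult.assoc)
    finally show ?thesis .
  qed
  have "integral {t1..t0} (ig (bipoly n c) (\<lambda>x y. - bipoly n d x y) h) =
        integral {t1..t0} (\<lambda>t. \<Sum>i\<le>n. \<Sum>j\<le>n - i. c i j * A i j t - d i j * B i j t)"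
    unfolding pw ..
  also have "\<dots> = (\<Sum>i\<le>n. integral {t1..t0} (\<lambda>t. \<Sum>j\<le>n - i. c i j * A i j t - d i j * B i j t))"
    by (intro integral_sum finite_atMost integrable_sum integrable_diff integrable_on_mult_right iA iB)
  also have "\<dots> = (\<Sum>i\<le>n. \<Sum>j\<le>n - i. integral {t1..t0} (\<lambda>t. c i j * A i j t - d i j * B i j t))"
    by (intro sum.cong refl integral_sum finite_atMost integrable_sum integrable_diff integrable_on_mult_right iA iB)
  also have "\<dots> = (\<Sum>i\<le>n. \<Sum>j\<le>n - i. c i j * integral {t1..t0} (A i j) - d i j * integral {t1..t0} (B i j))"
    by (intro sum.cong refl) (simp add: integral_diff iA iB integrable_on_mult_right)
  finally show ?thesis unfolding e1 e2 unfolding cw_ig by (simp add: sum_negf[symmetric] sum_subtractf)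
qed


lemma cw_shift:
  "cw_arc_int P Q h (t0 + pi) (t1 + pi) =
   cw_arc_int (\<lambda>x y. - P (-x) (-y)) (\<lambda>x y. - Q (-x) (-y)) h t0 t1"
proof -
  have "integral {t1 + pi..t0 + pi} (ig P Q h) = integral {t1..t0} (ig P Q h \<circ> (+) pi)"
    by (rule integral_shift_Icc_real[symmetric])
  also have "(ig P Q h \<circ> (+) pi) = ig (\<lambda>x y. - P (-x) (-y)) (\<lambda>x y. - Q (-x) (-y)) h"
    by (rule ext) (simp add: ig_def cos_add sin_add)
  finally show ?thesis unfolding cw_ig by simp
qed

lemma cw_scaleP: "cw_arc_int (\<lambda>x y. c * P x y) (\<lambda>x y. 0) h t0 t1 = c * cw_arc_int P (\<lambda>x y. 0) h t0 t1"
  unfolding cw_arc_int_def by (simp add: mult.assoc)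

lemma cw_scaleQ: "cw_arc_int (\<lambda>x y. 0) (\<lambda>x y. c * Q x y) h t0 t1 = c * cw_arc_int (\<lambda>x y. 0) Q h t0 t1"
  unfolding cw_arc_int_def by (simp add: mult.assoc)

lemma mono_neg: "(\<lambda>x y. - ((-x) ^ i * (-y) ^ j)) = (\<lambda>(x::real) (y::real). (- ((-1) ^ (i + j))) * (x ^ i * y ^ j))"
proof (intro ext)
  fix x y :: real
  have "(-x) ^ i = (-1) ^ i * x ^ i" by (rule power_minus)
  moreover have "(-y) ^ j = (-1) ^ j * y ^ j" by (rule power_minus)
  ultimately show "- ((-x) ^ i * (-y) ^ j) = (- ((-1) ^ (i + j))) * (x ^ i * y ^ j)"
    by (simp add: power_add)
qed

lemma cw_ftc:
  assumes "t1 \<le> t0"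
  shows "cw_arc_int (\<lambda>x y. 0) (\<lambda>x y. x ^ i * y ^ j) h t0 t1 =
    ((sqrt h * cos t1) ^ i * (sqrt h * sin t1) ^ (j + 1) - (sqrt h * cos t0) ^ i * (sqrt h * sin t0) ^ (j + 1)
     - real i * cw_arc_int (\<lambda>x y. x ^ (i - 1) * y ^ (j + 1)) (\<lambda>x y. 0) h t0 t1) / real (j + 1)"
proof -
  define G where "G t = (sqrt h * cos t) ^ i * (sqrt h * sin t) ^ (j + 1)" for t
  define F1 where "F1 = ig (\<lambda>x y. x ^ (i - 1) * y ^ (j + 1)) (\<lambda>x y. 0) h"
  define F2 where "F2 = ig (\<lambda>x y. 0) (\<lambda>x y. x ^ i * y ^ j) h"
  have i1: "F1 integrable_on {t1..t0}" unfolding F1_def ig_def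
    by (intro integrable_continuous_interval continuous_intros)
  have i2: "F2 integrable_on {t1..t0}" unfolding F2_def ig_def
    by (intro integrable_continuous_interval continuous_intros)
  have D: "(G has_real_derivative (real i * F1 t + real (j + 1) * F2 t)) (at t)" for t
    unfolding G_def F1_def F2_def ig_def
    by (rule derivative_eq_intros refl | simp)+
  have "((\<lambda>t. real i * F1 t + real (j + 1) * F2 t) has_integral (G t0 - G t1)) {t1..t0}"
    by (rule fundamental_theorem_of_calculus[OF assms])
       (rule has_field_derivative_at_within[OF D, unfolded has_real_derivative_iff_has_vector_derivative])
  then have "integral {t1..t0} (\<lambda>t. real i * F1 t + real (j + 1) * F2 t) = G t0 - G t1"
    by (rule integral_unique)
  moreover have "integral {t1..t0} (\<lambda>t. real i * F1 t + real (j + 1) * F2 t)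
     = real i * integral {t1..t0} F1 + real (j + 1) * integral {t1..t0} F2"
    by (simp add: integral_add i1 i2 integrable_on_mult_right)
  ultimately have "real i * integral {t1..t0} F1 + real (j + 1) * integral {t1..t0} F2 = G t0 - G t1"
    by simp
  then show ?thesis unfolding cw_ig F1_def[symmetric] F2_def[symmetric] G_def[symmetric]
    by (simp add: field_simps)
qed


lemma geom:
  assumes h: "h > 0"
  shows "0 < uu h" "0 \<le> angA h" "angA h < pi / 2"
        "sqrt h * cos (angA h) = uu h" "sqrt h * sin (angA h) = (uu h) ^ 2"
proof -
  define s where "s = sqrt (1 + 4 * h)"
  have s1: "s > 1" unfolding s_def using h by (simp add: real_less_rsqrt)
  have s2: "s ^ 2 = 1 + 4 * h" unfolding s_def using h by simp
  have u2: "(uu h) ^ 2 = (s - 1) / 2" unfolding uu_def s_def[symmetric] using s1 by simp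
  show up: "0 < uu h" unfolding uu_def s_def[symmetric] using s1 by simp
  have hu: "h = (uu h) ^ 2 * (1 + (uu h) ^ 2)"
    unfolding u2 using s2 by (simp add: field_simps power2_eq_square)
  have sh: "sqrt h = uu h * sqrt (1 + (uu h) ^ 2)"
    using up by (subst hu) (simp add: real_sqrt_mult)
  have sq: "sqrt (1 + (uu h) ^ 2) > 0" by (simp add: add_pos_nonneg)
  show "0 \<le> angA h" unfolding angA_def using up by simp
  show "angA h < pi / 2" unfolding angA_def by (rule arctan_ubound)
  show "sqrt h * cos (angA h) = uu h" unfolding angA_def cos_arctan sh using sq by simp
  show "sqrt h * sin (angA h) = (uu h) ^ 2" unfolding angA_def sin_arctan sh using sq
    by (simp add: power2_eq_square)
qed


lemma good_arc:
  assumes A: "\<And>P Q h. A P Q h = cw_arc_int P Q h (T0 h) (T1 h)"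
    and g1: "\<And>i j. i + j \<le> n \<Longrightarrow> good n (\<lambda>h. A (\<lambda>x y. x ^ i * y ^ j) (\<lambda>x y. 0) h)"
    and g2: "\<And>i j. i + j \<le> n \<Longrightarrow> good n (\<lambda>h. A (\<lambda>x y. 0) (\<lambda>x y. x ^ i * y ^ j) h)"
  shows "good n (\<lambda>h. A (bipoly n c) (\<lambda>x y. - bipoly n d x y) h)"
proof (rule good_cong)
  show "good n (\<lambda>h. \<Sum>i\<le>n. \<Sum>j\<le>n - i. c i j * A (\<lambda>x y. x ^ i * y ^ j) (\<lambda>x y. 0) h
                      - d i j * A (\<lambda>x y. 0) (\<lambda>x y. x ^ i * y ^ j) h)"
    by (intro good_sum finite_atMost good_diff good_scale g1 g2) auto
  show "A (bipoly n c) (\<lambda>x y. - bipoly n d x y) h = (\<Sum>i\<le>n. \<Sum>j\<le>n - i. c i j * A (\<lambda>x y. x ^ i * y ^ j) (\<lambda>x y. 0) h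
                      - d i j * A (\<lambda>x y. 0) (\<lambda>x y. x ^ i * y ^ j) h)" for h
    unfolding A by (rule arc_bipoly)
qed

lemma powhelp: "(c * x) ^ i * (d * x ^ 2) ^ (j + 1) = c ^ i * d ^ (j + 1) * (x::real) ^ (i + 2 * j + 2)"
proof -
  have "(c * x) ^ i * (d * x ^ 2) ^ (j + 1) = c ^ i * d ^ (j + 1) * (x ^ i * (x ^ 2) ^ (j + 1))"
    by (simp add: power_mult_distrib)
  also have "x ^ i * (x ^ 2) ^ (j + 1) = x ^ (i + 2 * j + 2)"
    by (simp add: power_mult[symmetric] power_add[symmetric])
  finally show ?thesis .
qed

lemma good_term: assumes "i + j \<le> n" shows "good n (\<lambda>h. real i * Iint (i - 1) (j + 1) h)"
proof (cases "i = 0")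
  case True then show ?thesis using good_zero by simp
next
  case False then show ?thesis using assms by (intro good_scale good_I) simp
qed

lemma good_termJ: assumes "i + j \<le> n" shows "good n (\<lambda>h. real i * Jint (i - 1) (j + 1) h)"
proof (cases "i = 0")
  case True then show ?thesis using good_zero by simp
next
  case False then show ?thesis using assms by (intro good_scale good_J) simp
qed

lemma deg_AB: assumes "i + j \<le> n" "(-1::real) ^ (j + 1) - 1 \<noteq> 0"
  shows "real (i + 2 * j + 2) \<le> 2 * real n + (3 + (-1) ^ n) / 2"
proof -
  have "even j" using assms(2) by (cases "even j") auto
  show ?thesis
  proof (cases "even n")
    case True then show ?thesis using assms(1) by (simp add: bnd_eq)
  next
    case False
    then have "j \<noteq> n" using \<open>even j\<close> by auto
    then show ?thesis using False assms(1) by (simp add: bnd_eq)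
  qed
qed

lemma deg_BC: assumes "i + j \<le> n" "((-1::real) ^ i - 1) * (-1) ^ (j + 1) \<noteq> 0"
  shows "real (i + 2 * j + 2) \<le> 2 * real n + (3 + (-1) ^ n) / 2"
proof -
  have "odd i" using assms(2) by (cases "even i") auto
  then have "i \<ge> 1" by (cases i) auto
  then show ?thesis using assms(1) by (cases "even n") (simp_all add: bnd_eq)
qed

lemma gAB_dx: "i + j \<le> n \<Longrightarrow> good n (\<lambda>h. arcAB (\<lambda>x y. x ^ i * y ^ j) (\<lambda>x y. 0) h)"
  using good_I[of i j n] unfolding Iint_def .

lemma gBC_dx: "i + j \<le> n \<Longrightarrow> good n (\<lambda>h. arcBC (\<lambda>x y. x ^ i * y ^ j) (\<lambda>x y. 0) h)"
  using good_J[of i j n] unfolding Jint_def .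

lemma gAB_dy: assumes ij: "i + j \<le> n"
  shows "good n (\<lambda>h. arcAB (\<lambda>x y. 0) (\<lambda>x y. x ^ i * y ^ j) h)"
proof (rule good_cong)
  show "good n (\<lambda>h. (1 / real (j + 1)) * ((((-1) ^ (j + 1) - 1) * uu h ^ (i + 2 * j + 2))
                     - real i * Iint (i - 1) (j + 1) h))"
    apply (rule good_scale, rule good_diff)
     apply (rule good_monom, rule deg_AB[OF ij], assumption)
    apply (rule good_term[OF ij])
    done
  fix h :: real assume h: "h > 0"
  note g = geom[OF h]
  define u where "u = uu h"
  define al where "al = angA h"
  have c1: "sqrt h * cos (- al) = 1 * u" "sqrt h * sin (- al) = (-1) * u ^ 2"
           "sqrt h * cos al = 1 * u" "sqrt h * sin al = 1 * u ^ 2"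
    using g unfolding u_def al_def by simp_all
  have "arcAB (\<lambda>x y. 0) (\<lambda>x y. x ^ i * y ^ j) h = cw_arc_int (\<lambda>x y. 0) (\<lambda>x y. x ^ i * y ^ j) h al (- al)"
    unfolding arcAB_def al_def ..
  also have "\<dots> = ((sqrt h * cos (- al)) ^ i * (sqrt h * sin (- al)) ^ (j + 1)
        - (sqrt h * cos al) ^ i * (sqrt h * sin al) ^ (j + 1)
     - real i * cw_arc_int (\<lambda>x y. x ^ (i - 1) * y ^ (j + 1)) (\<lambda>x y. 0) h al (- al)) / real (j + 1)"
    by (rule cw_ftc) (use g in \<open>simp add: al_def\<close>)
  also have "\<dots> = (1 / real (j + 1)) * ((((-1) ^ (j + 1) - 1) * u ^ (i + 2 * j + 2))
                     - real i * Iint (i - 1) (j + 1) h)"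
    unfolding c1 powhelp Iint_def arcAB_def al_def[symmetric] by (simp add: field_simps)
  finally show "arcAB (\<lambda>x y. 0) (\<lambda>x y. x ^ i * y ^ j) h = (1 / real (j + 1)) * ((((-1) ^ (j + 1) - 1) * uu h ^ (i + 2 * j + 2))
                     - real i * Iint (i - 1) (j + 1) h)" unfolding u_def .
qed

lemma gBC_dy: assumes ij: "i + j \<le> n"
  shows "good n (\<lambda>h. arcBC (\<lambda>x y. 0) (\<lambda>x y. x ^ i * y ^ j) h)"
proof (rule good_cong)
  show "good n (\<lambda>h. (1 / real (j + 1)) * (((((-1) ^ i - 1) * (-1) ^ (j + 1)) * uu h ^ (i + 2 * j + 2))
                     - real i * Jint (i - 1) (j + 1) h))"
    apply (rule good_scale, rule good_diff)
     apply (rule good_monom, rule deg_BC[OF ij], assumption)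
    apply (rule good_termJ[OF ij])
    done
  fix h :: real assume h: "h > 0"
  note g = geom[OF h]
  define u where "u = uu h"
  define al where "al = angA h"
  have c1: "sqrt h * cos (- pi + al) = (-1) * u" "sqrt h * sin (- pi + al) = (-1) * u ^ 2"
           "sqrt h * cos (- al) = 1 * u" "sqrt h * sin (- al) = (-1) * u ^ 2"
    using g unfolding u_def al_def by (simp_all add: cos_add sin_add)
  have "arcBC (\<lambda>x y. 0) (\<lambda>x y. x ^ i * y ^ j) h = cw_arc_int (\<lambda>x y. 0) (\<lambda>x y. x ^ i * y ^ j) h (- al) (- pi + al)"
    unfolding arcBC_def al_def ..
  also have "\<dots> = ((sqrt h * cos (- pi + al)) ^ i * (sqrt h * sin (- pi + al)) ^ (j + 1)
        - (sqrt h * cos (- al)) ^ i * (sqrt h * sin (- al)) ^ (j + 1)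
     - real i * cw_arc_int (\<lambda>x y. x ^ (i - 1) * y ^ (j + 1)) (\<lambda>x y. 0) h (- al) (- pi + al)) / real (j + 1)"
    by (rule cw_ftc) (use g in \<open>simp add: al_def\<close>)
  also have "\<dots> = (1 / real (j + 1)) * (((((-1) ^ i - 1) * (-1) ^ (j + 1)) * u ^ (i + 2 * j + 2))
                     - real i * Jint (i - 1) (j + 1) h)"
    unfolding c1 powhelp Jint_def arcBC_def al_def[symmetric] by (simp add: field_simps)
  finally show "arcBC (\<lambda>x y. 0) (\<lambda>x y. x ^ i * y ^ j) h = (1 / real (j + 1)) * (((((-1) ^ i - 1) * (-1) ^ (j + 1)) * uu h ^ (i + 2 * j + 2))
                     - real i * Jint (i - 1) (j + 1) h)" unfolding u_def .
qed

lemma CD_AB: "arcCD P Q h = arcAB (\<lambda>x y. - P (-x) (-y)) (\<lambda>x y. - Q (-x) (-y)) h"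
  unfolding arcCD_def arcAB_def using cw_shift[of P Q h "angA h" "- angA h"] by (simp add: add.commute)

lemma DA_BC: "arcDA P Q h = arcBC (\<lambda>x y. - P (-x) (-y)) (\<lambda>x y. - Q (-x) (-y)) h"
  unfolding arcDA_def arcBC_def using cw_shift[of P Q h "- angA h" "- pi + angA h"] by (simp add: add.commute)

lemma gCD_dx: "i + j \<le> n \<Longrightarrow> good n (\<lambda>h. arcCD (\<lambda>x y. x ^ i * y ^ j) (\<lambda>x y. 0) h)"
  unfolding CD_AB mono_neg unfolding arcAB_def by (simp only: minus_zero cw_scaleP, fold arcAB_def)
    (intro good_scale gAB_dx)


lemma gCD_dy: "i + j \<le> n \<Longrightarrow> good n (\<lambda>h. arcCD (\<lambda>x y. 0) (\<lambda>x y. x ^ i * y ^ j) h)"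
  unfolding CD_AB mono_neg unfolding arcAB_def by (simp only: minus_zero cw_scaleQ, fold arcAB_def)
    (intro good_scale gAB_dy)

lemma gDA_dx: "i + j \<le> n \<Longrightarrow> good n (\<lambda>h. arcDA (\<lambda>x y. x ^ i * y ^ j) (\<lambda>x y. 0) h)"
  unfolding DA_BC mono_neg unfolding arcBC_def by (simp only: minus_zero cw_scaleP, fold arcBC_def)
    (intro good_scale gBC_dx)

lemma gDA_dy: "i + j \<le> n \<Longrightarrow> good n (\<lambda>h. arcDA (\<lambda>x y. 0) (\<lambda>x y. x ^ i * y ^ j) h)"
  unfolding DA_BC mono_neg unfolding arcBC_def by (simp only: minus_zero cw_scaleQ, fold arcBC_def)
    (intro good_scale gBC_dy)

theorem lemma2p1:
  fixes n :: nat and a b :: "nat \<Rightarrow> nat \<Rightarrow> nat \<Rightarrow> real"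
  assumes "n \<ge> 1"
  shows "\<exists>(\<tau>::nat \<Rightarrow> nat \<Rightarrow> real) (\<sigma>::nat \<Rightarrow> nat \<Rightarrow> real) (\<phi>::real poly).
           real (degree \<phi>) \<le> 2 * real n + (3 + (-1) ^ n) / 2 \<and>
           (\<forall>h>0. melnikov n a b h =
                    (\<Sum>i\<le>n. \<Sum>j\<le>n - i. \<tau> i j * Iint i j h)
                  + (\<Sum>i\<le>n. \<Sum>j\<le>n - i. \<sigma> i j * Jint i j h)
                  + poly \<phi> (uu h))"
proof -
  have g1: "good n (\<lambda>h. arcAB (bipoly n (b 1)) (\<lambda>x y. - bipoly n (a 1) x y) h)"
    using good_arc[of arcAB angA "\<lambda>h. - angA h" n, OF arcAB_def gAB_dx gAB_dy] .
  have g2: "good n (\<lambda>h. arcBC (bipoly n (b 2)) (\<lambda>x y. - bipoly n (a 2) x y) h)"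
    using good_arc[of arcBC "\<lambda>h. - angA h" "\<lambda>h. - pi + angA h" n, OF arcBC_def gBC_dx gBC_dy] .
  have g3: "good n (\<lambda>h. arcCD (bipoly n (b 3)) (\<lambda>x y. - bipoly n (a 3) x y) h)"
    using good_arc[of arcCD "\<lambda>h. pi + angA h" "\<lambda>h. pi - angA h" n, OF arcCD_def gCD_dx gCD_dy] .
  have g4: "good n (\<lambda>h. arcDA (bipoly n (b 4)) (\<lambda>x y. - bipoly n (a 4) x y) h)"
    using good_arc[of arcDA "\<lambda>h. pi - angA h" angA n, OF arcDA_def gDA_dx gDA_dy] .
  have "good n (\<lambda>h. arcAB (bipoly n (b 1)) (\<lambda>x y. - bipoly n (a 1) x y) h
    + arcBC (bipoly n (b 2)) (\<lambda>x y. - bipoly n (a 2) x y) h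
    + arcCD (bipoly n (b 3)) (\<lambda>x y. - bipoly n (a 3) x y) h
    + arcDA (bipoly n (b 4)) (\<lambda>x y. - bipoly n (a 4) x y) h)"
    by (intro good_add g1 g2 g3 g4)
  then have "good n (melnikov n a b)" unfolding melnikov_def[abs_def] .
  then show ?thesis unfolding good_def .
qed

end
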